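(* Let $k\geq1$ be an integer. (i) With $\Delta_{2k}=\{(t_1,\ldots,t_{2k})\in(0,1)^{2k}: t_1<t_2,\ t_{2i-1}<t_{2i-2},\ t_{2i-1}<t_{2i}\ (i=2,\ldots,k)\}$, \[ \zeta(2k)=\frac{1}{2(1-2^{1-2k})}\int_{\Delta_{2k}}\prod_{i=1}^{k}\frac{1}{(1-t_{2i-1})\,t_{2i}}\,dt_1\cdots dt_{2k}. \] (ii) With $\Delta_{2k+1}=\{(t_1,\ldots,t_{2k+1})\in(0,1)^{2k+1}: t_{2i}>t_{2i-1},\ t_{2i}>t_{2i+1}\ (i=1,\ldots,k)\}$, \[ \zeta(2k+1)=\frac12\int_{\Delta_{2k+1}}\prod_{i=1}^{k}\frac{1}{(1-t_{2i-1})\,t_{2i}}\cdot\frac{1}{1-t_{2k+1}}\,dt_1\cdots dt_{2k+1}. \]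
   Context: $\zeta(s)=\sum_{n\geq1}n^{-s}$ is the Riemann zeta function. *)

theory Defs
  imports "HOL-Analysis.Analysis"
begin

definition zeta :: "real \<Rightarrow> real" where
  "zeta s = (\<Sum>n. 1 / real (Suc n) powr s)"

abbreviation cube_measure :: "nat \<Rightarrow> (nat \<Rightarrow> real) measure" where
  "cube_measure n \<equiv> PiM {1..n} (\<lambda>_. lborel)"

definition Delta_even :: "nat \<Rightarrow> (nat \<Rightarrow> real) set" where
  "Delta_even k = {t \<in> space (cube_measure (2*k)).
      (\<forall>i\<in>{1..2*k}. 0 < t i \<and> t i < 1) \<and> t 1 < t 2 \<and>
      (\<forall>i\<in>{2..k}. t (2*i-1) < t (2*i-2) \<and> t (2*i-1) < t (2*i)) }"

definition Delta_odd :: "nat \<Rightarrow> (nat \<Rightarrow> real) set" where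
  "Delta_odd k = {t \<in> space (cube_measure (2*k+1)).
      (\<forall>i\<in>{1..2*k+1}. 0 < t i \<and> t i < 1) \<and>
      (\<forall>i\<in>{1..k}. t (2*i) > t (2*i-1) \<and> t (2*i) > t (2*i+1)) }"

end

theory Submission
  imports Defs
begin

definition cc :: "nat \<Rightarrow> nat \<Rightarrow> real" where
  "cc N j = (\<Prod>i=1..j. (real N + 1 - real i) / (real N + real i))"

lemma cc_0[simp]: "cc N 0 = 1" by (simp add: cc_def)

lemma cc_Suc: "cc N (Suc j) = cc N j * ((real N - real j) / (real N + real j + 1))"
proof -
  have "{1..Suc j} = insert (Suc j) {1..j}" by auto
  then show ?thesis unfolding cc_def by (simp add: algebra_simps)
qed

lemma cc_zero: "j > N \<Longrightarrow> cc N j = 0"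
proof (induction j)
  case 0 then show ?case by simp
next
  case (Suc j)
  then show ?case by (cases "j = N") (auto simp: cc_Suc)
qed

lemma cc_bounds: "0 \<le> cc N j \<and> cc N j \<le> 1"
proof (induction j)
  case 0 then show ?case by simp
next
  case (Suc j)
  show ?case
  proof (cases "j < N")
    case True
    have a: "0 \<le> (real N - real j) / (real N + real j + 1)" using True by simp
    have b: "(real N - real j) / (real N + real j + 1) \<le> 1" by (simp add: field_simps)
    have "0 \<le> cc N j * ((real N - real j) / (real N + real j + 1))"
      using Suc a by (intro mult_nonneg_nonneg) auto
    moreover have "cc N j * ((real N - real j) / (real N + real j + 1)) \<le> 1"
      using Suc a b by (intro mult_le_one) auto
    ultimately show ?thesis unfolding cc_Suc by blast
  next
    case False then show ?thesis using cc_zero[of N "Suc j"] by simp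
  qed
qed

lemma cc_rec_aux1: "(u::real) \<noteq> 0 \<Longrightarrow> d \<noteq> 0 \<Longrightarrow> (a * (x*u) / d) * (y / u) = a * x * y / d"
  by (simp add: field_simps)

lemma cc_rec_aux2: "(u::real) \<noteq> 0 \<Longrightarrow> a * x * y / d = (a * (x / u)) * (y * u) / d"
  by (simp add: field_simps)

lemma cc_rec: "cc N j = cc (Suc N) j * ((real (Suc N))^2 - (real j)^2) / (real (Suc N))^2"
proof (induction j)
  case 0 then show ?case by simp
next
  case (Suc j)
  define a where "a = cc (Suc N) j"
  define n where "n = real N"
  define m where "m = real j"
  have p: "n + m + 1 \<noteq> 0" "n + m + 2 \<noteq> 0" "n + 1 \<noteq> 0" unfolding n_def m_def by linarith+
  have e1: "(n+1)^2 - m^2 = (n+1-m)*(n+m+1)" by (simp add: power2_eq_square algebra_simps)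
  have e2: "(n+1)^2 - (m+1)^2 = (n-m)*(n+m+2)" by (simp add: power2_eq_square algebra_simps)
  have "cc N (Suc j) = (a * ((n+1)^2 - m^2) / (n+1)^2) * ((n - m) / (n + m + 1))"
    unfolding cc_Suc Suc a_def n_def m_def by (simp add: add.commute)
  also have "\<dots> = a * (n+1-m) * (n-m) / (n+1)^2"
    unfolding e1 using p by (subst cc_rec_aux1) auto
  also have "\<dots> = (a * ((n + 1 - m) / (n + m + 2))) * ((n+1)^2 - (m+1)^2) / (n+1)^2"
    unfolding e2 using p by (subst cc_rec_aux2[where u="n+m+2"]) (auto simp: mult_ac)
  also have "\<dots> = cc (Suc N) (Suc j) * ((real (Suc N))^2 - (real (Suc j))^2) / (real (Suc N))^2"
    unfolding cc_Suc a_def n_def m_def by (simp add: algebra_simps)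
  finally show ?case .
qed

lemma cc_mono: "cc N j \<le> cc (Suc N) j"
proof -
  have "cc N j = cc (Suc N) j * (((real (Suc N))^2 - (real j)^2) / (real (Suc N))^2)"
    using cc_rec[of N j] by simp
  also have "\<dots> \<le> cc (Suc N) j"
  proof (cases "j \<le> Suc N")
    case True
    then have "(real j)^2 \<le> (real (Suc N))^2" by (simp add: power_mono)
    then have "0 \<le> ((real (Suc N))^2 - (real j)^2) / (real (Suc N))^2" by simp
    moreover have "((real (Suc N))^2 - (real j)^2) / (real (Suc N))^2 \<le> 1" by (simp add: field_simps)
    ultimately show ?thesis using cc_bounds[of "Suc N" j] by (intro mult_left_le) auto
  next
    case False then show ?thesis using cc_zero[of "Suc N" j] by simp
  qed
  finally show ?thesis .
qed

lemma cc_lim: "(\<lambda>N. cc N j) \<longlonglongrightarrow> 1"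
proof -
  have "(\<lambda>N. \<Prod>i=1..j. (real N + 1 - real i) / (real N + real i)) \<longlonglongrightarrow> (\<Prod>i=1..j. 1)"
  proof (rule tendsto_prod)
    fix i assume i: "i \<in> {1..j}"
    have e: "(real N + 1 - real i) / (real N + real i) = 1 - (2 * real i - 1) * inverse (real N + real i)" for N
      using i by (simp add: field_simps)
    have "(\<lambda>N. 1 - (2 * real i - 1) * inverse (real N + real i)) \<longlonglongrightarrow> 1 - (2 * real i - 1) * 0"
      proof (intro tendsto_intros tendsto_inverse_0_at_top)
      show "filterlim (\<lambda>x. real x + real i) at_top sequentially"
        by (rule filterlim_at_top_mono[OF filterlim_real_sequentially]) auto
    qed
    then show "(\<lambda>N. (real N + 1 - real i) / (real N + real i)) \<longlonglongrightarrow> 1"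
      unfolding e by simp
  qed
  then show ?thesis unfolding cc_def by simp
qed

lemma cc_1: "cc N 1 = real N / (real N + 1)"
  unfolding cc_def by simp

lemma cc_Suc0[simp]: "cc N (Suc 0) = real N / (real N + 1)"
  unfolding cc_def by simp

lemma key_alg: "real N > 0 \<Longrightarrow> (real N + real (Suc (Suc M))) * c2 = c1 * (real N - real (Suc M)) \<Longrightarrow>
   c1 = (real N + real (Suc M))/(2*real N)*c1 + (real N + real (Suc (Suc M)))/(2*real N)*c2"
proof -
  assume n: "real N > 0" and h: "(real N + real (Suc (Suc M))) * c2 = c1 * (real N - real (Suc M))"
  have "(real N + real (Suc M))/(2*real N)*c1 + (real N + real (Suc (Suc M)))/(2*real N)*c2
     = ((real N + real (Suc M))*c1 + (real N + real (Suc (Suc M)))*c2)/(2*real N)"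
    by (simp add: add_divide_distrib algebra_simps)
  also have "\<dots> = ((real N + real (Suc M))*c1 + c1 * (real N - real (Suc M)))/(2*real N)" using h by simp
  also have "\<dots> = c1" using n by (simp add: algebra_simps)
  finally show ?thesis by simp
qed

lemma key_alg2: "(real N + real (Suc (Suc M))) * c2 = c1 * (real N - real (Suc M)) \<Longrightarrow>
   real (Suc M) * c1 = (real N + real (Suc M))/2*c1 - (real N + real (Suc (Suc M)))/2*c2"
proof -
  assume h: "(real N + real (Suc (Suc M))) * c2 = c1 * (real N - real (Suc M))"
  have "(real N + real (Suc M))/2*c1 - (real N + real (Suc (Suc M)))/2*c2
      = ((real N + real (Suc M))*c1 - (real N + real (Suc (Suc M)))*c2)/2"
    by (simp add: diff_divide_distrib algebra_simps)
  also have "\<dots> = ((real N + real (Suc M))*c1 - c1 * (real N - real (Suc M)))/2" using h by simp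
  also have "\<dots> = real (Suc M) * c1" by (simp add: algebra_simps)
  finally show ?thesis by simp
qed

lemma cc_step: "(real N + real (Suc (Suc M))) * cc N (Suc (Suc M)) = cc N (Suc M) * (real N - real (Suc M))"
proof -
  have d: "real N + real (Suc M) + 1 \<noteq> 0" by linarith
  have e: "real N + real (Suc (Suc M)) = real N + real (Suc M) + 1" by simp
  show ?thesis unfolding e cc_Suc[of N "Suc M"] using d by simp
qed

lemma cc_diff: "cc (Suc N) j - cc N j = cc (Suc N) j * (real j)^2 / (real (Suc N))^2"
proof -
  have "real (Suc N) \<noteq> 0" by simp
  then show ?thesis by (subst cc_rec[of N j]) (simp add: field_simps)
qed

lemma alt_tele:
  assumes N: "N \<ge> 1"
  shows "(\<Sum>j=1..M. (-1)^(Suc j) * cc N j) =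
     (real N + 1) / (2 * real N) * cc N 1 - (-1)^M * ((real N + real (Suc M)) / (2 * real N) * cc N (Suc M))"
proof (induction M)
  case 0 then show ?case by simp
next
  case (Suc M)
  have Np: "real N > 0" using N by simp
  have key: "cc N (Suc M) = (real N + real (Suc M)) / (2 * real N) * cc N (Suc M)
     + (real N + real (Suc (Suc M))) / (2 * real N) * cc N (Suc (Suc M))"
    by (rule key_alg[OF Np cc_step])
  have "(\<Sum>j=1..Suc M. (-1)^(Suc j) * cc N j) = (\<Sum>j=1..M. (-1)^(Suc j) * cc N j) + (-1)^(Suc (Suc M)) * cc N (Suc M)"
    by simp
  also have "\<dots> = (real N + 1) / (2 * real N) * cc N 1 - (-1)^M * ((real N + real (Suc M)) / (2 * real N) * cc N (Suc M))
     + (-1)^M * cc N (Suc M)" unfolding Suc by simp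
  also have "\<dots> = (real N + 1) / (2 * real N) * cc N 1 - (-1)^(Suc M) * ((real N + real (Suc (Suc M))) / (2 * real N) * cc N (Suc (Suc M)))"
  proof -
    define X where "X = (real N + real (Suc M)) / (2 * real N) * cc N (Suc M)"
    define Y where "Y = (real N + real (Suc (Suc M))) / (2 * real N) * cc N (Suc (Suc M))"
    have k2: "cc N (Suc M) = X + Y" using key unfolding X_def Y_def .
    show ?thesis unfolding X_def[symmetric] Y_def[symmetric] by (subst k2) (simp add: algebra_simps)
  qed
  finally show ?case .
qed

lemma alt_sum_cc: "N \<ge> 1 \<Longrightarrow> 2 * (\<Sum>j=1..N. (-1)^(Suc j) * cc N j) = 1"
proof -
  assume N: "N \<ge> 1"
  have "(\<Sum>j=1..N. (-1)^(Suc j) * cc N j) = (real N + 1) / (2 * real N) * cc N 1"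
    using alt_tele[OF N, of N] cc_zero[of N "Suc N"] by simp
  also have "\<dots> = 1/2" using N by (simp add: cc_1)
  finally show ?thesis by simp
qed

lemma lin_tele:
  shows "(\<Sum>j=1..M. real j * cc N j) =
     (real N + 1) / 2 * cc N 1 - (real N + real (Suc M)) / 2 * cc N (Suc M)"
proof (induction M)
  case 0 then show ?case by simp
next
  case (Suc M)
  have key: "real (Suc M) * cc N (Suc M) = (real N + real (Suc M)) / 2 * cc N (Suc M)
     - (real N + real (Suc (Suc M))) / 2 * cc N (Suc (Suc M))"
    by (rule key_alg2[OF cc_step])
  show ?case using Suc key by simp
qed

lemma lin_sum_cc: "(\<Sum>j=1..N. real j * cc N j) = real N / 2"
proof -
  have "(\<Sum>j=1..N. real j * cc N j) = (real N + 1) / 2 * cc N 1"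
    using lin_tele[of N N] cc_zero[of N "Suc N"] by simp
  also have "\<dots> = real N / 2"
  proof -
    have "real N + 1 \<noteq> 0" by linarith
    then show ?thesis by (simp add: cc_1 field_simps)
  qed
  finally show ?thesis .
qed

lemma harm_cc: "2 * (\<Sum>j=1..N. cc N j / real j) = (\<Sum>m=1..N. 1 / real m)"
proof (induction N)
  case 0 then show ?case by simp
next
  case (Suc N)
  have ext: "(\<Sum>j=1..Suc N. cc N j / real j) = (\<Sum>j=1..N. cc N j / real j)"
    using cc_zero[of N "Suc N"] by simp
  have "2 * (\<Sum>j=1..Suc N. cc (Suc N) j / real j) - 2 * (\<Sum>j=1..Suc N. cc N j / real j)
      = 2 * (\<Sum>j=1..Suc N. (cc (Suc N) j - cc N j) / real j)"
    by (simp add: sum_subtractf diff_divide_distrib algebra_simps)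
  also have "\<dots> = 2 * (\<Sum>j=1..Suc N. real j * cc (Suc N) j / (real (Suc N))^2)"
    by (intro arg_cong[where f="\<lambda>x. 2 * x"] sum.cong refl) (simp add: cc_diff power2_eq_square)
  also have "\<dots> = 2 * (\<Sum>j=1..Suc N. real j * cc (Suc N) j) / (real (Suc N))^2"
    by (simp only: sum_divide_distrib[symmetric] times_divide_eq_right)
  also have "\<dots> = 1 / real (Suc N)"
  proof -
    have g: "x \<noteq> 0 \<Longrightarrow> 2 * (x / 2) / x^2 = 1 / x" for x :: real
      by (simp add: power2_eq_square)
    show ?thesis unfolding lin_sum_cc by (rule g) simp
  qed
  finally show ?case using Suc ext by simp
qed

primrec gt :: "nat \<Rightarrow> nat \<Rightarrow> nat \<Rightarrow> real" where
  "gt N 0 m = (if m \<le> N then 1 else 0)"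
| "gt N (Suc i) m = (\<Sum>n\<in>{m..N}. gt N i n / (real n)^2)"

lemma gt_nonneg: "0 \<le> gt N i m"
  by (induction i arbitrary: m) (auto intro!: sum_nonneg divide_nonneg_nonneg)

lemma gt_zero: "N < m \<Longrightarrow> gt N i m = 0"
  by (cases i) auto

lemma gt_mono: "gt N i m \<le> gt (Suc N) i m"
proof (induction i arbitrary: m)
  case 0 then show ?case by simp
next
  case (Suc i)
  have "(\<Sum>n\<in>{m..N}. gt N i n / (real n)^2) \<le> (\<Sum>n\<in>{m..N}. gt (Suc N) i n / (real n)^2)"
    using Suc by (intro sum_mono divide_right_mono) auto
  also have "\<dots> \<le> (\<Sum>n\<in>{m..Suc N}. gt (Suc N) i n / (real n)^2)"
    by (intro sum_mono2) (auto intro: divide_nonneg_nonneg gt_nonneg)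
  finally show ?case by simp
qed

lemma gt_head: "m \<le> Suc N \<Longrightarrow> gt (Suc N) (Suc k) m = gt N (Suc k) m + gt (Suc N) k m / (real (Suc N))^2"
proof (induction k arbitrary: m)
  case 0
  have "gt (Suc N) (Suc 0) m = (\<Sum>n\<in>{m..Suc N}. 1 / (real n)^2)" by simp
  also have "\<dots> = (\<Sum>n\<in>{m..N}. 1 / (real n)^2) + 1 / (real (Suc N))^2"
    using 0 by (simp add: atLeastAtMostSuc_conv)
  also have "(\<Sum>n\<in>{m..N}. 1 / (real n)^2) = gt N (Suc 0) m" by simp
  finally show ?case using 0 by simp
next
  case (Suc k)
  have "gt (Suc N) (Suc (Suc k)) m = (\<Sum>n\<in>{m..Suc N}. gt (Suc N) (Suc k) n / (real n)^2)" by simp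
  also have "\<dots> = (\<Sum>n\<in>{m..Suc N}. gt N (Suc k) n / (real n)^2 + gt (Suc N) k n / (real (Suc N))^2 / (real n)^2)"
    using Suc.IH by (intro sum.cong refl) (simp add: add_divide_distrib)
  also have "\<dots> = (\<Sum>n\<in>{m..Suc N}. gt N (Suc k) n / (real n)^2) + (\<Sum>n\<in>{m..Suc N}. gt (Suc N) k n / (real n)^2) / (real (Suc N))^2"
    by (simp only: sum.distrib sum_divide_distrib divide_divide_eq_left mult.commute)
  also have "(\<Sum>n\<in>{m..Suc N}. gt N (Suc k) n / (real n)^2) = gt N (Suc (Suc k)) m"
    using Suc.prems gt_zero[of N "Suc N" "Suc k"] by (simp add: atLeastAtMostSuc_conv)
  finally show ?case by simp
qed

definition Sg :: "(nat \<Rightarrow> real) \<Rightarrow> nat \<Rightarrow> nat \<Rightarrow> real" where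
  "Sg a N k = 2 * (\<Sum>j=1..N. a j * cc N j / (real j)^(2*k))"

lemma Sg_0N[simp]: "Sg a 0 k = 0" by (simp add: Sg_def)

lemma Sg_rec: "Sg a (Suc N) (Suc k) = Sg a N (Suc k) + Sg a (Suc N) k / (real (Suc N))^2"
proof -
  have ext: "(\<Sum>j=1..Suc N. a j * cc N j / (real j)^(2*Suc k)) = (\<Sum>j=1..N. a j * cc N j / (real j)^(2*Suc k))"
    using cc_zero[of N "Suc N"] by simp
  have "(\<Sum>j=1..Suc N. a j * cc (Suc N) j / (real j)^(2*Suc k)) - (\<Sum>j=1..Suc N. a j * cc N j / (real j)^(2*Suc k))
      = (\<Sum>j=1..Suc N. a j * (cc (Suc N) j - cc N j) / (real j)^(2*Suc k))"
    by (simp add: sum_subtractf diff_divide_distrib algebra_simps)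
  also have "\<dots> = (\<Sum>j=1..Suc N. a j * cc (Suc N) j / (real j)^(2*k) / (real (Suc N))^2)"
  proof (intro sum.cong refl)
    fix j assume j: "j \<in> {1..Suc N}"
    then have jp: "real j \<noteq> 0" by auto
    have "(real j)^(2 * Suc k) = (real j)^(2*k) * (real j)^2" by (simp add: power_add[symmetric])
    then show "a j * (cc (Suc N) j - cc N j) / real j ^ (2 * Suc k) = a j * cc (Suc N) j / real j ^ (2 * k) / (real (Suc N))\<^sup>2"
      unfolding cc_diff using jp by (simp add: field_simps)
  qed
  also have "\<dots> = (\<Sum>j=1..Suc N. a j * cc (Suc N) j / (real j)^(2*k)) / (real (Suc N))^2"
    by (simp only: sum_divide_distrib)
  finally show ?thesis unfolding Sg_def using ext by (simp add: algebra_simps)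
qed

lemma even_finite: "gt N k 1 = Sg (\<lambda>j. (-1)^(Suc j)) N k"
proof (induction N arbitrary: k)
  case 0 then show ?case by (simp add: gt_zero)
next
  case (Suc N)
  note outer = Suc.IH
  show ?case
  proof (induction k)
    case 0 then show ?case using alt_sum_cc[of "Suc N"] by (simp add: Sg_def)
  next
    case (Suc k)
    then show ?case using gt_head[of 1 N k] outer[of "Suc k"] Sg_rec[of _ N k] by (simp del: gt.simps)
  qed
qed

definition Og :: "nat \<Rightarrow> nat \<Rightarrow> real" where
  "Og N k = (\<Sum>m=1..N. gt N k m / real m)"

lemma Og_rec: "Og (Suc N) (Suc k) = Og N (Suc k) + Og (Suc N) k / (real (Suc N))^2"
proof -
  have "Og (Suc N) (Suc k) = (\<Sum>m=1..Suc N. gt N (Suc k) m / real m + gt (Suc N) k m / (real (Suc N))^2 / real m)"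
    unfolding Og_def by (intro sum.cong refl) (simp add: gt_head add_divide_distrib del: gt.simps)
  also have "\<dots> = (\<Sum>m=1..Suc N. gt N (Suc k) m / real m) + (\<Sum>m=1..Suc N. gt (Suc N) k m / real m) / (real (Suc N))^2"
    by (simp only: sum.distrib sum_divide_distrib divide_divide_eq_left mult.commute)
  also have "(\<Sum>m=1..Suc N. gt N (Suc k) m / real m) = Og N (Suc k)"
    unfolding Og_def using gt_zero[of N "Suc N" "Suc k"] by simp
  finally show ?thesis unfolding Og_def by simp
qed

lemma odd_finite: "Og N k = Sg (\<lambda>j. 1 / real j) N k"
proof (induction N arbitrary: k)
  case 0 then show ?case by (simp add: Og_def)
next
  case (Suc N)
  note outer = Suc.IH
  show ?case
  proof (induction k)
    case 0
    have "Og (Suc N) 0 = (\<Sum>m=1..Suc N. 1 / real m)" unfolding Og_def by simp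
    also have "\<dots> = Sg (\<lambda>j. 1 / real j) (Suc N) 0" unfolding Sg_def harm_cc[symmetric] by simp
    finally show ?case .
  next
    case (Suc k)
    then show ?case using Og_rec[of N k] outer[of "Suc k"] Sg_rec[of _ N k] by simp
  qed
qed

lemma summable_pow_shift: "m \<ge> 2 \<Longrightarrow> summable (\<lambda>j. 1 / (real (Suc j))^m)"
proof -
  assume m: "m \<ge> 2"
  have "summable (\<lambda>n. inverse (real n ^ m))" using inverse_power_summable[OF m] by simp
  then have "summable (\<lambda>n. inverse (real (Suc n) ^ m))" by (subst summable_Suc_iff)
  then show ?thesis by (simp add: inverse_eq_divide)
qed

lemma zeta_nat: "zeta (real m) = (\<Sum>j. 1 / (real (Suc j))^m)"
  unfolding zeta_def by (simp add: powr_realpow)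

lemma Sg_suminf:
  "Sg a N k = (\<Sum>j. 2 * a (Suc j) * cc N (Suc j) / (real (Suc j))^(2*k))"
proof -
  have "(\<Sum>j. 2 * a (Suc j) * cc N (Suc j) / (real (Suc j))^(2*k)) = (\<Sum>j<N. 2 * a (Suc j) * cc N (Suc j) / (real (Suc j))^(2*k))"
    by (rule suminf_finite) (auto simp: cc_zero)
  also have "\<dots> = Sg a N k"
    unfolding Sg_def by (simp add: sum.atLeast1_atMost_eq sum_distrib_left mult.assoc)
  finally show ?thesis by simp
qed

lemma Sg_limit:
  assumes k: "k \<ge> 1" and a: "\<And>j. \<bar>a j\<bar> \<le> 1"
  shows "(\<lambda>N. Sg a N k) \<longlonglongrightarrow> (\<Sum>j. 2 * a (Suc j) / (real (Suc j))^(2*k))"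
proof -
  have "summable (\<lambda>j. 2 * (1 / (real (Suc j))^(2*k)))"
    using summable_pow_shift[of "2*k"] k by (intro summable_mult) auto
  then have sM: "summable (\<lambda>j. 2 / (real (Suc j))^(2*k))" by simp
  have "eventually (\<lambda>N. summable (\<lambda>j. norm (2 * a (Suc j) * cc N (Suc j) / (real (Suc j))^(2*k)))) sequentially \<and>
        summable (\<lambda>j. norm (2 * a (Suc j) / (real (Suc j))^(2*k))) \<and>
        ((\<lambda>N. \<Sum>j. 2 * a (Suc j) * cc N (Suc j) / (real (Suc j))^(2*k)) \<longlongrightarrow> (\<Sum>j. 2 * a (Suc j) / (real (Suc j))^(2*k))) sequentially"
  proof (rule tannerys_theorem[OF _ _ sM])
    fix j
    show "(\<lambda>N. 2 * a (Suc j) * cc N (Suc j) / (real (Suc j))^(2*k)) \<longlonglongrightarrow> 2 * a (Suc j) / (real (Suc j))^(2*k)"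
      using tendsto_mult[OF tendsto_const[of "2 * a (Suc j)"] cc_lim[of "Suc j"]]
      by (intro tendsto_divide) auto
  next
    show "\<forall>\<^sub>F (j, N) in at_top \<times>\<^sub>F sequentially. norm (2 * a (Suc j) * cc N (Suc j) / (real (Suc j))^(2*k)) \<le> 2 / (real (Suc j))^(2*k)"
    proof (rule always_eventually, safe)
      fix j N
      have "\<bar>a (Suc j) * cc N (Suc j)\<bar> \<le> 1"
        using a[of "Suc j"] cc_bounds[of N "Suc j"] by (simp add: abs_mult mult_le_one)
      then show "norm (2 * a (Suc j) * cc N (Suc j) / (real (Suc j))^(2*k)) \<le> 2 / (real (Suc j))^(2*k)"
        by (simp add: abs_mult divide_right_mono)
    qed
  qed simp
  then show ?thesis unfolding Sg_suminf by blast
qed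

lemma eta_zeta:
  assumes m: "m \<ge> 2"
  shows "(\<Sum>j. (-1)^j / (real (Suc j))^m) = (1 - 2 / 2^m) * (\<Sum>j. 1 / (real (Suc j))^m)"
proof -
  define z where "z j = 1 / (real (Suc j))^m" for j
  have sz: "summable z" unfolding z_def using summable_pow_shift[OF m] .
  have sa: "summable (\<lambda>j. (-1)^j * z j)"
    by (rule summable_norm_cancel, rule summable_comparison_test[OF _ sz]) (auto simp: z_def abs_mult)
  have f: "(\<lambda>j. z j - (-1)^j * z j) sums (suminf z - (\<Sum>j. (-1)^j * z j))"
    by (intro sums_diff summable_sums sz sa)
  have "(\<lambda>i. z (2*i+1) - (-1)^(2*i+1) * z (2*i+1)) sums (suminf z - (\<Sum>j. (-1)^j * z j))"
  proof (subst sums_mono_reindex[where g="\<lambda>i. 2*i+1"])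
    show "strict_mono (\<lambda>i::nat. 2*i+1)" by (rule strict_monoI) simp
    show "z n - (-1)^n * z n = 0" if "n \<notin> range (\<lambda>i. 2*i+1)" for n
    proof -
      have "even n" using that by (metis oddE range_eqI)
      then show ?thesis by simp
    qed
  qed (rule f)
  moreover have "z (2*i+1) - (-1)^(2*i+1) * z (2*i+1) = (2 / 2^m) * z i" for i
  proof -
    have "real (Suc (2*i+1)) = 2 * real (Suc i)" by simp
    then have "(real (Suc (2*i+1)))^m = 2^m * (real (Suc i))^m" by (simp only: power_mult_distrib)
    then show ?thesis unfolding z_def by simp
  qed
  ultimately have "(\<lambda>i. (2 / 2^m) * z i) sums (suminf z - (\<Sum>j. (-1)^j * z j))" by simp
  moreover have "(\<lambda>i. (2 / 2^m) * z i) sums ((2 / 2^m) * suminf z)"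
    by (intro sums_mult summable_sums sz)
  ultimately have "suminf z - (\<Sum>j. (-1)^j * z j) = (2 / 2^m) * suminf z" using sums_unique2 by blast
  then have "(\<Sum>j. (-1)^j * z j) = (1 - 2 / 2^m) * suminf z" by (simp add: algebra_simps)
  then show ?thesis unfolding z_def by simp
qed

lemma even_limit:
  assumes k: "k \<ge> 1"
  shows "(\<lambda>N. gt N k 1) \<longlonglongrightarrow> 2 * (1 - 2 powr (1 - 2 * real k)) * zeta (real (2*k))"
proof -
  have L: "(\<lambda>N. gt N k 1) \<longlonglongrightarrow> (\<Sum>j. 2 * (-1)^(Suc (Suc j)) / (real (Suc j))^(2*k))"
    unfolding even_finite by (rule Sg_limit[OF k]) simp
  have m: "2*k \<ge> 2" using k by simp
  have "(\<Sum>j. 2 * (-1)^(Suc (Suc j)) / (real (Suc j))^(2*k)) = 2 * (\<Sum>j. (-1)^j / (real (Suc j))^(2*k))"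
  proof -
    have s: "summable (\<lambda>j. (-1)^j / (real (Suc j))^(2*k))"
      by (rule summable_norm_cancel, rule summable_comparison_test[OF _ summable_pow_shift[OF m]]) (auto simp: abs_mult)
    show ?thesis using suminf_mult[OF s, of 2] by (simp add: mult.assoc)
  qed
  also have "\<dots> = 2 * ((1 - 2 / 2^(2*k)) * zeta (real (2*k)))"
    unfolding eta_zeta[OF m] zeta_nat by simp
  also have "2 / 2^(2*k) = (2::real) powr (1 - 2 * real k)"
    by (simp add: powr_diff powr_realpow[symmetric])
  finally have e: "(\<Sum>j. 2 * (-1)^(Suc (Suc j)) / (real (Suc j))^(2*k)) = 2 * ((1 - 2 powr (1 - 2 * real k)) * zeta (real (2*k)))" .
  show ?thesis using L unfolding e mult.assoc .
qed

lemma odd_limit: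
  assumes k: "k \<ge> 1"
  shows "(\<lambda>N. Og N k) \<longlonglongrightarrow> 2 * zeta (real (2*k+1))"
proof -
  have L: "(\<lambda>N. Og N k) \<longlonglongrightarrow> (\<Sum>j. 2 * (1 / real (Suc j)) / (real (Suc j))^(2*k))"
    unfolding odd_finite by (rule Sg_limit[OF k]) (case_tac j, auto)
  have m: "2*k+1 \<ge> 2" using k by simp
  have "(\<Sum>j. 2 * (1 / real (Suc j)) / (real (Suc j))^(2*k)) = (\<Sum>j. 2 * (1 / (real (Suc j))^(2*k+1)))"
    by (simp add: field_simps)
  also have "\<dots> = 2 * zeta (real (2*k+1))"
    unfolding zeta_nat by (rule suminf_mult[OF summable_pow_shift[OF m]])
  finally show ?thesis using L by simp
qed

definition GG :: "nat \<Rightarrow> nat \<Rightarrow> ennreal" where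
  "GG i l = (SUP N. ennreal (gt N i l))"

lemma gt_incseq: "incseq (\<lambda>N. gt N i l)"
  by (rule incseq_SucI) (rule gt_mono)

lemma GG_0: "GG 0 l = 1"
proof -
  have "(SUP N. ennreal (gt N 0 l)) = 1"
  proof (rule antisym)
    show "(SUP N. ennreal (gt N 0 l)) \<le> 1" by (rule SUP_least) simp
    show "1 \<le> (SUP N. ennreal (gt N 0 l))"
      by (rule SUP_upper2[of l]) simp_all
  qed
  then show ?thesis unfolding GG_def .
qed

lemma SUP_ennreal_lim:
  assumes inc: "incseq X" and nn: "\<And>N. 0 \<le> X N" and lim: "X \<longlonglongrightarrow> L"
  shows "(SUP N. ennreal (X N)) = ennreal L"
proof -
  have "incseq (\<lambda>N. ennreal (X N))" using inc by (auto simp: incseq_def ennreal_leI)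
  then have "(\<lambda>N. ennreal (X N)) \<longlonglongrightarrow> (SUP N. ennreal (X N))" by (rule LIMSEQ_SUP)
  moreover have "(\<lambda>N. ennreal (X N)) \<longlonglongrightarrow> ennreal L" using lim by (rule tendsto_ennrealI)
  ultimately show ?thesis by (rule LIMSEQ_unique)
qed

lemma GG_Suc: "GG (Suc i) l = (\<Sum>n. ennreal (of_bool (l \<le> n) / (real n)^2) * GG i n)"
proof -
  have "(\<Sum>n. ennreal (of_bool (l \<le> n) / (real n)^2) * GG i n)
      = (\<Sum>n. SUP N. ennreal (of_bool (l \<le> n) / (real n)^2 * gt N i n))"
    unfolding GG_def SUP_mult_left_ennreal
    by (intro suminf_cong SUP_cong refl) (simp add: ennreal_mult[symmetric] gt_nonneg)
  also have "\<dots> = (SUP N. \<Sum>n. ennreal (of_bool (l \<le> n) / (real n)^2 * gt N i n))"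
  proof (rule ennreal_suminf_SUP_eq)
    fix n show "incseq (\<lambda>N. ennreal (of_bool (l \<le> n) / (real n)^2 * gt N i n))"
      using gt_incseq[of i n]
      by (auto simp: incseq_def intro!: ennreal_leI divide_right_mono)
  qed
  also have "\<dots> = (SUP N. ennreal (gt N (Suc i) l))"
  proof (intro SUP_cong refl)
    fix N
    have "(\<Sum>n. ennreal (of_bool (l \<le> n) / (real n)^2 * gt N i n)) = (\<Sum>n<Suc N. ennreal (of_bool (l \<le> n) / (real n)^2 * gt N i n))"
      by (rule suminf_finite) (auto simp: gt_zero)
    also have "\<dots> = ennreal (\<Sum>n<Suc N. of_bool (l \<le> n) / (real n)^2 * gt N i n)"
      by (rule sum_ennreal) (simp add: gt_nonneg)
    also have "(\<Sum>n<Suc N. of_bool (l \<le> n) / (real n)^2 * gt N i n) = (\<Sum>n\<in>{l..N}. gt N i n / (real n)^2)"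
      by (rule sum.mono_neutral_cong_right) auto
    finally show "(\<Sum>n. ennreal (of_bool (l \<le> n) / (real n)^2 * gt N i n)) = ennreal (gt N (Suc i) l)" by simp
  qed
  finally show ?thesis unfolding GG_def by simp
qed

lemma even_value:
  assumes k: "k \<ge> 1"
  shows "GG k 1 = ennreal (2 * (1 - 2 powr (1 - 2 * real k)) * zeta (real (2*k)))"
  unfolding GG_def by (rule SUP_ennreal_lim[OF gt_incseq gt_nonneg even_limit[OF k]])

lemma Og_mono: "Og N k \<le> Og (Suc N) k"
proof -
  have "Og N k \<le> (\<Sum>m=1..N. gt (Suc N) k m / real m)"
    unfolding Og_def by (intro sum_mono divide_right_mono gt_mono) auto
  also have "\<dots> \<le> Og (Suc N) k"
    unfolding Og_def by (intro sum_mono2) (auto intro: divide_nonneg_nonneg gt_nonneg)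
  finally show ?thesis .
qed

lemma odd_value:
  assumes k: "k \<ge> 1"
  shows "(\<Sum>m. ennreal (1 / real (Suc m)) * GG k (Suc m)) = ennreal (2 * zeta (real (2*k+1)))"
proof -
  have "(\<Sum>m. ennreal (1 / real (Suc m)) * GG k (Suc m)) = (\<Sum>m. SUP N. ennreal (gt N k (Suc m) / real (Suc m)))"
    unfolding GG_def SUP_mult_left_ennreal
    by (intro suminf_cong SUP_cong refl) (simp add: ennreal_mult[symmetric] gt_nonneg)
  also have "\<dots> = (SUP N. \<Sum>m. ennreal (gt N k (Suc m) / real (Suc m)))"
  proof (rule ennreal_suminf_SUP_eq)
    fix m show "incseq (\<lambda>N. ennreal (gt N k (Suc m) / real (Suc m)))"
      using gt_incseq[of k "Suc m"]
      by (auto simp: incseq_def intro!: ennreal_leI divide_right_mono)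
  qed
  also have "\<dots> = (SUP N. ennreal (Og N k))"
  proof (intro SUP_cong refl)
    fix N
    have "(\<Sum>m. ennreal (gt N k (Suc m) / real (Suc m))) = (\<Sum>m<N. ennreal (gt N k (Suc m) / real (Suc m)))"
      by (rule suminf_finite) (auto simp: gt_zero)
    also have "\<dots> = ennreal (\<Sum>m<N. gt N k (Suc m) / real (Suc m))"
      by (rule sum_ennreal) (simp add: gt_nonneg)
    also have "(\<Sum>m<N. gt N k (Suc m) / real (Suc m)) = Og N k"
      unfolding Og_def by (simp add: sum.atLeast1_atMost_eq)
    finally show "(\<Sum>m. ennreal (gt N k (Suc m) / real (Suc m))) = ennreal (Og N k)" .
  qed
  also have "\<dots> = ennreal (2 * zeta (real (2*k+1)))"
    by (rule SUP_ennreal_lim[OF incseq_SucI[of "\<lambda>N. Og N k", OF Og_mono] _ odd_limit[OF k]])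
       (auto simp: Og_def intro!: sum_nonneg divide_nonneg_nonneg gt_nonneg)
  finally show ?thesis .
qed

lemma nn_int_pow:
  assumes "0 \<le> a" "a \<le> b"
  shows "(\<integral>\<^sup>+x. ennreal (x^l) * indicator {a<..<b} x \<partial>lborel) = ennreal ((b^Suc l - a^Suc l) / real (Suc l))"
proof (rule nn_integral_has_integral_lebesgue')
  show "\<And>x. x \<in> {a<..<b} \<Longrightarrow> 0 \<le> x^l" using assms by auto
  have "((\<lambda>x. x^l) has_integral ((\<lambda>x. x^Suc l / real (Suc l)) b - (\<lambda>x. x^Suc l / real (Suc l)) a)) {a..b}"
  proof (rule fundamental_theorem_of_calculus[OF assms(2)])
    fix x :: real assume "x \<in> {a..b}"
    have d: "((\<lambda>x. x^Suc l) has_real_derivative real (Suc l) * x^l) (at x within {a..b})"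
      using DERIV_pow[of "Suc l" x] by (simp add: has_field_derivative_at_within)
    then have "((\<lambda>x. x^Suc l / real (Suc l)) has_real_derivative x^l) (at x within {a..b})"
      using DERIV_cdivide[where c="real (Suc l)", OF d] by simp
    then show "((\<lambda>x. x^Suc l / real (Suc l)) has_vector_derivative x^l) (at x within {a..b})"
      by (simp add: has_real_derivative_iff_has_vector_derivative)
  qed
  then have "((\<lambda>x. x^l) has_integral ((b^Suc l - a^Suc l) / real (Suc l))) (cbox a b)"
    by (simp add: diff_divide_distrib)
  then show "((\<lambda>x. x^l) has_integral ((b^Suc l - a^Suc l) / real (Suc l))) {a<..<b}"
    by (subst box_real(1)[symmetric]) (rule has_integral_open_interval[THEN iffD2])
qed

definition Fodd :: "nat \<Rightarrow> real \<Rightarrow> ennreal" where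
  "Fodd i z = indicator {0<..<1} z * (\<Sum>l. ennreal (z^l) * GG i (Suc l))"

definition Feven :: "nat \<Rightarrow> real \<Rightarrow> ennreal" where
  "Feven i y = indicator {0<..<1} y * (\<Sum>l. ennreal (y^l / real (Suc l)) * GG i (Suc l))"

lemma Fodd_meas[measurable]: "Fodd i \<in> borel_measurable borel"
  unfolding Fodd_def by measurable

lemma Feven_meas[measurable]: "Feven i \<in> borel_measurable borel"
  unfolding Feven_def by measurable

lemma Fodd_0: "Fodd 0 z = ennreal (1 / (1 - z)) * indicator {0<..<1} z"
proof (cases "z \<in> {0<..<1}")
  case True
  then have z: "norm z < 1" by auto
  have "(\<Sum>l. ennreal (z^l)) = ennreal (\<Sum>l. z^l)"
    using True by (intro suminf_ennreal2 summable_geometric z) auto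
  also have "\<dots> = ennreal (1 / (1 - z))" using suminf_geometric[OF z] by simp
  finally show ?thesis unfolding Fodd_def GG_0 using True by simp
next
  case False then show ?thesis unfolding Fodd_def by simp
qed

lemma Feven_rec: "Feven i y = ennreal (1 / y) * indicator {0<..<1} y * (\<integral>\<^sup>+x. Fodd i x * of_bool (x < y) \<partial>lborel)"
proof (cases "y \<in> {0<..<1}")
  case False then show ?thesis unfolding Feven_def by simp
next
  case True
  then have y: "0 < y" "y < 1" by auto
  have "(\<integral>\<^sup>+x. Fodd i x * of_bool (x < y) \<partial>lborel)
      = (\<integral>\<^sup>+x. (\<Sum>l. (ennreal (x^l) * indicator {0<..<y} x) * GG i (Suc l)) \<partial>lborel)"
  proof (rule nn_integral_cong)
    fix x :: real
    show "Fodd i x * of_bool (x < y) = (\<Sum>l. (ennreal (x^l) * indicator {0<..<y} x) * GG i (Suc l))"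
      unfolding Fodd_def using y by (cases "x \<in> {0<..<y}") auto
  qed
  also have "\<dots> = (\<Sum>l. \<integral>\<^sup>+x. (ennreal (x^l) * indicator {0<..<y} x) * GG i (Suc l) \<partial>lborel)"
    by (rule nn_integral_suminf) measurable
  also have "\<dots> = (\<Sum>l. ennreal (y^Suc l / real (Suc l)) * GG i (Suc l))"
    using y by (subst nn_integral_multc) (auto simp: nn_int_pow)
  finally have I: "(\<integral>\<^sup>+x. Fodd i x * of_bool (x < y) \<partial>lborel) = (\<Sum>l. ennreal (y^Suc l / real (Suc l)) * GG i (Suc l))" .
  have "ennreal (1 / y) * indicator {0<..<1} y * (\<integral>\<^sup>+x. Fodd i x * of_bool (x < y) \<partial>lborel)
      = (\<Sum>l. ennreal (1 / y) * (ennreal (y^Suc l / real (Suc l)) * GG i (Suc l)))"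
    unfolding I using True by simp
  also have "\<dots> = (\<Sum>l. ennreal (y^l / real (Suc l)) * GG i (Suc l))"
  proof (rule suminf_cong)
    fix l
    have "ennreal (1 / y) * ennreal (y^Suc l / real (Suc l)) = ennreal (1 / y * (y^Suc l / real (Suc l)))"
      using y by (simp add: ennreal_mult[symmetric])
    also have "1 / y * (y^Suc l / real (Suc l)) = y^l / real (Suc l)" using y by simp
    finally show "ennreal (1 / y) * (ennreal (y^Suc l / real (Suc l)) * GG i (Suc l)) = ennreal (y^l / real (Suc l)) * GG i (Suc l)"
      by (simp add: mult.assoc[symmetric])
  qed
  finally show ?thesis unfolding Feven_def using True by simp
qed

lemma suminf_swap_ennreal: "(\<Sum>l. \<Sum>p. f l p) = (\<Sum>p. \<Sum>l. f l p :: ennreal)"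
proof -
  have "(\<Sum>l. \<Sum>p. f l p) = (\<Sum>l. \<integral>\<^sup>+p. f l p \<partial>count_space UNIV)" by (simp add: nn_integral_count_space_nat)
  also have "\<dots> = \<integral>\<^sup>+p. (\<Sum>l. f l p) \<partial>count_space UNIV" by (rule nn_integral_suminf[symmetric]) simp
  also have "\<dots> = (\<Sum>p. \<Sum>l. f l p)" by (simp add: nn_integral_count_space_nat)
  finally show ?thesis .
qed

lemma GG_Suc_shift: "GG (Suc i) (Suc p) = (\<Sum>l. ennreal (of_bool (p \<le> l) / (real (Suc l))^2) * GG i (Suc l))"
proof -
  have "GG (Suc i) (Suc p) = (\<Sum>n. ennreal (of_bool (Suc p \<le> n) / (real n)^2) * GG i n)" by (rule GG_Suc)
  also have "\<dots> = (\<Sum>l. ennreal (of_bool (Suc p \<le> Suc l) / (real (Suc l))^2) * GG i (Suc l))"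
  proof (rule suminf_mono_reindex[where g=Suc, symmetric])
    show "strict_mono Suc" by (rule strict_monoI) simp
    fix n assume "n \<notin> range Suc"
    then have "n = 0" by (cases n) auto
    then show "ennreal (of_bool (Suc p \<le> n) / (real n)^2) * GG i n = 0" by simp
  qed
  finally show ?thesis by simp
qed

lemma Fodd_rec: "Fodd (Suc i) z = ennreal (1 / (1 - z)) * indicator {0<..<1} z * (\<integral>\<^sup>+y. Feven i y * of_bool (z < y) \<partial>lborel)"
proof (cases "z \<in> {0<..<1}")
  case False then show ?thesis unfolding Fodd_def by simp
next
  case True
  then have z: "0 < z" "z < 1" by auto
  have "(\<integral>\<^sup>+y. Feven i y * of_bool (z < y) \<partial>lborel)
      = (\<integral>\<^sup>+y. (\<Sum>l. (ennreal (y^l) * indicator {z<..<1} y) * (ennreal (1 / real (Suc l)) * GG i (Suc l))) \<partial>lborel)"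
  proof (rule nn_integral_cong)
    fix y :: real
    show "Feven i y * of_bool (z < y) = (\<Sum>l. (ennreal (y^l) * indicator {z<..<1} y) * (ennreal (1 / real (Suc l)) * GG i (Suc l)))"
    proof (cases "y \<in> {z<..<1}")
      case True
      then have "y > 0" using z by auto
      then have "ennreal (y^l / real (Suc l)) = ennreal (y^l) * ennreal (1 / real (Suc l))" for l
        by (simp add: ennreal_mult[symmetric])
      then show ?thesis unfolding Feven_def using True z by (simp add: mult.assoc)
    next
      case False
      then show ?thesis unfolding Feven_def using z by auto
    qed
  qed
  also have "\<dots> = (\<Sum>l. \<integral>\<^sup>+y. (ennreal (y^l) * indicator {z<..<1} y) * (ennreal (1 / real (Suc l)) * GG i (Suc l)) \<partial>lborel)"
    by (rule nn_integral_suminf) measurable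
  also have "\<dots> = (\<Sum>l. ennreal ((1 - z^Suc l) / real (Suc l)) * (ennreal (1 / real (Suc l)) * GG i (Suc l)))"
    using z by (subst nn_integral_multc) (auto simp: nn_int_pow)
  finally have I: "(\<integral>\<^sup>+y. Feven i y * of_bool (z < y) \<partial>lborel) = (\<Sum>l. ennreal ((1 - z^Suc l) / real (Suc l)) * (ennreal (1 / real (Suc l)) * GG i (Suc l)))" .
  have "ennreal (1 / (1 - z)) * indicator {0<..<1} z * (\<integral>\<^sup>+y. Feven i y * of_bool (z < y) \<partial>lborel)
      = (\<Sum>l. ennreal (1 / (1 - z)) * (ennreal ((1 - z^Suc l) / real (Suc l)) * (ennreal (1 / real (Suc l)) * GG i (Suc l))))"
    unfolding I using True by simp
  also have "\<dots> = (\<Sum>l. \<Sum>p. ennreal (z^p) * (ennreal (of_bool (p \<le> l) / (real (Suc l))^2) * GG i (Suc l)))"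
  proof (rule suminf_cong)
    fix l
    have "z^Suc l \<le> 1" using z by (intro power_le_one) auto
    then have z1: "1 - z^Suc l \<ge> 0" by simp
    have "ennreal (1 / (1 - z)) * (ennreal ((1 - z^Suc l) / real (Suc l)) * ennreal (1 / real (Suc l)))
        = ennreal (1 / (1 - z) * ((1 - z^Suc l) / real (Suc l)) * (1 / real (Suc l)))"
      using z z1 by (simp add: ennreal_mult[symmetric])
    also have "1 / (1 - z) * ((1 - z^Suc l) / real (Suc l)) * (1 / real (Suc l)) = (\<Sum>p<Suc l. z^p) / (real (Suc l))^2"
    proof -
      have g: "(\<Sum>p<Suc l. z^p) = (1 - z^Suc l)/(1-z)" using z by (subst sum_gp_strict) simp
      show ?thesis unfolding g by (simp add: power2_eq_square)
    qed
    also have "ennreal ((\<Sum>p<Suc l. z^p) / (real (Suc l))^2) = (\<Sum>p<Suc l. ennreal (z^p / (real (Suc l))^2))"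
      using z by (subst sum_ennreal) (auto simp: sum_divide_distrib simp del: sum.lessThan_Suc)
    also have "\<dots> = (\<Sum>p<Suc l. ennreal (z^p) * ennreal (of_bool (p \<le> l) / (real (Suc l))^2))"
      using z by (intro sum.cong refl) (simp add: ennreal_mult[symmetric])
    also have "\<dots> = (\<Sum>p. ennreal (z^p) * ennreal (of_bool (p \<le> l) / (real (Suc l))^2))"
      by (rule suminf_finite[symmetric]) auto
    finally show "ennreal (1 / (1 - z)) * (ennreal ((1 - z^Suc l) / real (Suc l)) * (ennreal (1 / real (Suc l)) * GG i (Suc l)))
        = (\<Sum>p. ennreal (z^p) * (ennreal (of_bool (p \<le> l) / (real (Suc l))^2) * GG i (Suc l)))"
      by (simp add: mult.assoc[symmetric] ennreal_suminf_multc)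
  qed
  also have "\<dots> = (\<Sum>p. \<Sum>l. ennreal (z^p) * (ennreal (of_bool (p \<le> l) / (real (Suc l))^2) * GG i (Suc l)))"
    by (rule suminf_swap_ennreal)
  also have "\<dots> = (\<Sum>p. ennreal (z^p) * GG (Suc i) (Suc p))"
    unfolding GG_Suc_shift by simp
  finally show ?thesis unfolding Fodd_def using True by simp
qed

lemma Feven_int: "(\<integral>\<^sup>+y. Feven i y \<partial>lborel) = GG (Suc i) (Suc 0)"
proof -
  have "(\<integral>\<^sup>+y. Feven i y \<partial>lborel) = (\<integral>\<^sup>+y. (\<Sum>l. (ennreal (y^l) * indicator {0<..<1} y) * (ennreal (1 / real (Suc l)) * GG i (Suc l))) \<partial>lborel)"
  proof (rule nn_integral_cong)
    fix y :: real
    show "Feven i y = (\<Sum>l. (ennreal (y^l) * indicator {0<..<1} y) * (ennreal (1 / real (Suc l)) * GG i (Suc l)))"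
    proof (cases "y \<in> {0<..<1}")
      case True
      then have "ennreal (y^l / real (Suc l)) = ennreal (y^l) * ennreal (1 / real (Suc l))" for l
        by (simp add: ennreal_mult[symmetric])
      then show ?thesis unfolding Feven_def using True by (simp add: mult.assoc)
    qed (simp add: Feven_def)
  qed
  also have "\<dots> = (\<Sum>l. \<integral>\<^sup>+y. (ennreal (y^l) * indicator {0<..<1} y) * (ennreal (1 / real (Suc l)) * GG i (Suc l)) \<partial>lborel)"
    by (rule nn_integral_suminf) measurable
  also have "\<dots> = (\<Sum>l. ennreal (1 / real (Suc l)) * (ennreal (1 / real (Suc l)) * GG i (Suc l)))"
    by (subst nn_integral_multc) (auto simp: nn_int_pow)
  also have "\<dots> = (\<Sum>l. ennreal (of_bool (0 \<le> l) / (real (Suc l))^2) * GG i (Suc l))"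
    by (intro suminf_cong) (simp add: ennreal_mult[symmetric] mult.assoc[symmetric] power2_eq_square)
  also have "\<dots> = GG (Suc i) (Suc 0)" unfolding GG_Suc_shift ..
  finally show ?thesis .
qed

lemma Fodd_int: "(\<integral>\<^sup>+z. Fodd i z \<partial>lborel) = (\<Sum>m. ennreal (1 / real (Suc m)) * GG i (Suc m))"
proof -
  have "(\<integral>\<^sup>+z. Fodd i z \<partial>lborel) = (\<integral>\<^sup>+z. (\<Sum>l. (ennreal (z^l) * indicator {0<..<1} z) * GG i (Suc l)) \<partial>lborel)"
    unfolding Fodd_def by (intro nn_integral_cong) (auto simp: indicator_def)
  also have "\<dots> = (\<Sum>l. \<integral>\<^sup>+z. (ennreal (z^l) * indicator {0<..<1} z) * GG i (Suc l) \<partial>lborel)"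
    by (rule nn_integral_suminf) measurable
  also have "\<dots> = (\<Sum>m. ennreal (1 / real (Suc m)) * GG i (Suc m))"
    by (subst nn_integral_multc) (auto simp: nn_int_pow)
  finally show ?thesis .
qed

definition W :: "nat \<Rightarrow> real \<Rightarrow> ennreal" where
  "W j y = ennreal (if odd j then 1 / (1 - y) else 1 / y)"

definition RR :: "nat \<Rightarrow> real \<Rightarrow> real \<Rightarrow> bool" where
  "RR j x y = (if odd j then x < y else y < x)"

definition Cset :: "nat \<Rightarrow> (nat \<Rightarrow> real) set" where
  "Cset n = {t \<in> space (PiM {1..n} (\<lambda>_. lborel)). (\<forall>i\<in>{1..n}. 0 < t i \<and> t i < 1) \<and> (\<forall>j\<in>{1..<n}. RR j (t j) (t (Suc j)))}"

lemma W_meas[measurable]: "W j \<in> borel_measurable borel"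
  unfolding W_def by measurable

lemma RR_meas[measurable]: "Measurable.pred (borel \<Otimes>\<^sub>M borel) (\<lambda>(x, y). RR j x y)"
  unfolding RR_def by measurable

lemma Cset_sets[measurable]: "Cset n \<in> sets (PiM {1..n} (\<lambda>_. lborel))"
  unfolding Cset_def RR_def by measurable

lemma PSF: "product_sigma_finite (\<lambda>_::nat. lborel :: real measure)"
  by standard

lemma Cset_Suc:
  assumes n: "n \<ge> 1" and x: "x \<in> space (PiM {1..n} (\<lambda>_. lborel :: real measure))"
  shows "indicator (Cset (Suc n)) (x(Suc n := y)) =
    (indicator (Cset n) x * indicator {0<..<1} y * of_bool (RR n (x n) y) :: ennreal)"
proof -
  have xs: "x(Suc n := y) \<in> space (PiM {1..Suc n} (\<lambda>_. lborel :: real measure))"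
    using x by (auto simp: space_PiM PiE_def extensional_def)
  have "(x(Suc n := y) \<in> Cset (Suc n)) \<longleftrightarrow> (x \<in> Cset n \<and> 0 < y \<and> y < 1 \<and> RR n (x n) y)"
  proof -
    have A: "(\<forall>i\<in>{1..Suc n}. 0 < (x(Suc n := y)) i \<and> (x(Suc n := y)) i < 1) \<longleftrightarrow>
          ((\<forall>i\<in>{1..n}. 0 < x i \<and> x i < 1) \<and> 0 < y \<and> y < 1)"
      by (auto simp: atLeastAtMostSuc_conv)
    have B: "(\<forall>j\<in>{1..<Suc n}. RR j ((x(Suc n := y)) j) ((x(Suc n := y)) (Suc j))) \<longleftrightarrow>
          ((\<forall>j\<in>{1..<n}. RR j (x j) (x (Suc j))) \<and> RR n (x n) y)"
    proof -
      have "{1..<Suc n} = insert n {1..<n}" using n by auto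
      moreover have "(\<forall>j\<in>{1..<n}. RR j ((x(Suc n := y)) j) ((x(Suc n := y)) (Suc j))) \<longleftrightarrow>
          (\<forall>j\<in>{1..<n}. RR j (x j) (x (Suc j)))" by auto
      ultimately show ?thesis by auto
    qed
    show ?thesis unfolding Cset_def using xs x A B by auto
  qed
  then show ?thesis by (auto simp: indicator_def)
qed

lemma prod_W_Suc:
  "(\<Prod>j\<in>{1..Suc n}. W j ((x(Suc n := y)) j)) = (\<Prod>j\<in>{1..n}. W j (x j)) * W (Suc n) y"
proof -
  have "(\<Prod>j\<in>{1..n}. W j ((x(Suc n := y)) j)) = (\<Prod>j\<in>{1..n}. W j (x j))"
    by (intro prod.cong) auto
  then show ?thesis by (simp add: atLeastAtMostSuc_conv mult.commute)
qed

lemma chain: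
  fixes F :: "nat \<Rightarrow> real \<Rightarrow> ennreal"
  assumes Fm: "\<And>n. F n \<in> borel_measurable borel"
    and F1: "\<And>y. F 1 y = W 1 y * indicator {0<..<1} y"
    and FS: "\<And>n y. n \<ge> 1 \<Longrightarrow> F (Suc n) y = W (Suc n) y * indicator {0<..<1} y * (\<integral>\<^sup>+x. F n x * of_bool (RR n x y) \<partial>lborel)"
    and n: "n \<ge> 1"
  shows "\<And>h. h \<in> borel_measurable borel \<Longrightarrow>
     (\<integral>\<^sup>+t. indicator (Cset n) t * (\<Prod>j\<in>{1..n}. W j (t j)) * h (t n) \<partial>PiM {1..n} (\<lambda>_. lborel)) = (\<integral>\<^sup>+y. F n y * h y \<partial>lborel)"
  using n
proof (induction n rule: dec_induct)
  case base
  fix h :: "real \<Rightarrow> ennreal" assume hm[measurable]: "h \<in> borel_measurable borel"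
  have "(\<integral>\<^sup>+t. indicator (Cset 1) t * (\<Prod>j\<in>{1..1}. W j (t j)) * h (t 1) \<partial>PiM {1..1} (\<lambda>_. lborel))
     = (\<integral>\<^sup>+t. indicator (Cset 1) t * (\<Prod>j\<in>{1}. W j (t j)) * h (t 1) \<partial>PiM {1} (\<lambda>_. lborel))"
    by simp
  also have "\<dots> = (\<integral>\<^sup>+t. (\<lambda>u. indicator {0<..<1} u * W 1 u * h u) (t 1) \<partial>PiM {1::nat} (\<lambda>_. lborel))"
  proof (rule nn_integral_cong)
    fix t assume t: "t \<in> space (PiM {1::nat} (\<lambda>_. lborel :: real measure))"
    have "indicator (Cset 1) t = (indicator {0<..<1} (t 1) :: ennreal)"
      using t unfolding Cset_def by (auto simp: indicator_def)
    then show "indicator (Cset 1) t * (\<Prod>j\<in>{1}. W j (t j)) * h (t 1) = (\<lambda>u. indicator {0<..<1} u * W 1 u * h u) (t 1)"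
      by simp
  qed
  also have "\<dots> = (\<integral>\<^sup>+u. indicator {0<..<1} u * W 1 u * h u \<partial>lborel)"
    by (rule product_sigma_finite.product_nn_integral_singleton[OF PSF]) measurable
  also have "\<dots> = (\<integral>\<^sup>+y. F 1 y * h y \<partial>lborel)"
    unfolding F1 by (simp add: mult_ac)
  finally show "(\<integral>\<^sup>+t. indicator (Cset 1) t * (\<Prod>j\<in>{1..1}. W j (t j)) * h (t 1) \<partial>PiM {1..1} (\<lambda>_. lborel)) = (\<integral>\<^sup>+y. F 1 y * h y \<partial>lborel)" .
next
  case (step n)
  fix h :: "real \<Rightarrow> ennreal" assume hm[measurable]: "h \<in> borel_measurable borel"
  note [measurable] = Fm
  define h' where "h' u = (\<integral>\<^sup>+y. indicator {0<..<1} y * of_bool (RR n u y) * W (Suc n) y * h y \<partial>lborel)" for u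
  have h'm[measurable]: "h' \<in> borel_measurable borel"
    unfolding h'_def by measurable
  have ins: "{1..Suc n} = insert (Suc n) {1..n}" by auto
  have "(\<integral>\<^sup>+t. indicator (Cset (Suc n)) t * (\<Prod>j\<in>{1..Suc n}. W j (t j)) * h (t (Suc n)) \<partial>PiM {1..Suc n} (\<lambda>_. lborel))
      = (\<integral>\<^sup>+x. (\<integral>\<^sup>+y. indicator (Cset (Suc n)) (x(Suc n := y)) * (\<Prod>j\<in>{1..Suc n}. W j ((x(Suc n := y)) j)) * h ((x(Suc n := y)) (Suc n)) \<partial>lborel) \<partial>PiM {1..n} (\<lambda>_. lborel))"
  proof -
    have fm: "(\<lambda>t. indicator (Cset (Suc n)) t * (\<Prod>j\<in>{1..Suc n}. W j (t j)) * h (t (Suc n))) \<in> borel_measurable (PiM {1..Suc n} (\<lambda>_. lborel))"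
      by measurable
    show ?thesis using fm unfolding ins by (intro product_sigma_finite.product_nn_integral_insert[OF PSF]) auto
  qed
  also have "\<dots> = (\<integral>\<^sup>+x. indicator (Cset n) x * (\<Prod>j\<in>{1..n}. W j (x j)) * h' (x n) \<partial>PiM {1..n} (\<lambda>_. lborel))"
  proof (rule nn_integral_cong)
    fix x assume x: "x \<in> space (PiM {1..n} (\<lambda>_. lborel :: real measure))"
    have "(\<integral>\<^sup>+y. indicator (Cset (Suc n)) (x(Suc n := y)) * (\<Prod>j\<in>{1..Suc n}. W j ((x(Suc n := y)) j)) * h ((x(Suc n := y)) (Suc n)) \<partial>lborel)
       = (\<integral>\<^sup>+y. (indicator (Cset n) x * (\<Prod>j\<in>{1..n}. W j (x j))) * (indicator {0<..<1} y * of_bool (RR n (x n) y) * W (Suc n) y * h y) \<partial>lborel)"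
      by (intro nn_integral_cong) (simp add: Cset_Suc[OF step.hyps(1) x] prod_W_Suc mult_ac)
    also have "\<dots> = indicator (Cset n) x * (\<Prod>j\<in>{1..n}. W j (x j)) * h' (x n)"
      unfolding h'_def by (rule nn_integral_cmult) measurable
    finally show "(\<integral>\<^sup>+y. indicator (Cset (Suc n)) (x(Suc n := y)) * (\<Prod>j\<in>{1..Suc n}. W j ((x(Suc n := y)) j)) * h ((x(Suc n := y)) (Suc n)) \<partial>lborel)
       = indicator (Cset n) x * (\<Prod>j\<in>{1..n}. W j (x j)) * h' (x n)" .
  qed
  also have "\<dots> = (\<integral>\<^sup>+u. F n u * h' u \<partial>lborel)"
    by (rule step.IH[OF h'm])
  also have "\<dots> = (\<integral>\<^sup>+u. (\<integral>\<^sup>+y. F n u * (indicator {0<..<1} y * of_bool (RR n u y) * W (Suc n) y * h y) \<partial>lborel) \<partial>lborel)"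
    unfolding h'_def by (intro nn_integral_cong nn_integral_cmult[symmetric]) measurable
  also have "\<dots> = (\<integral>\<^sup>+y. (\<integral>\<^sup>+u. F n u * (indicator {0<..<1} y * of_bool (RR n u y) * W (Suc n) y * h y) \<partial>lborel) \<partial>lborel)"
    by (rule lborel_pair.Fubini'[symmetric]) measurable
  also have "\<dots> = (\<integral>\<^sup>+y. F (Suc n) y * h y \<partial>lborel)"
  proof (rule nn_integral_cong)
    fix y :: real
    have "(\<integral>\<^sup>+u. F n u * (indicator {0<..<1} y * of_bool (RR n u y) * W (Suc n) y * h y) \<partial>lborel)
        = (\<integral>\<^sup>+u. (W (Suc n) y * indicator {0<..<1} y * h y) * (F n u * of_bool (RR n u y)) \<partial>lborel)"
      by (intro nn_integral_cong) (simp add: mult_ac)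
    also have "\<dots> = (W (Suc n) y * indicator {0<..<1} y * h y) * (\<integral>\<^sup>+u. F n u * of_bool (RR n u y) \<partial>lborel)"
      by (rule nn_integral_cmult) measurable
    also have "\<dots> = F (Suc n) y * h y"
      unfolding FS[OF step.hyps(1)] by (simp add: mult_ac)
    finally show "(\<integral>\<^sup>+u. F n u * (indicator {0<..<1} y * of_bool (RR n u y) * W (Suc n) y * h y) \<partial>lborel) = F (Suc n) y * h y" .
  qed
  finally show "(\<integral>\<^sup>+t. indicator (Cset (Suc n)) t * (\<Prod>j\<in>{1..Suc n}. W j (t j)) * h (t (Suc n)) \<partial>PiM {1..Suc n} (\<lambda>_. lborel)) = (\<integral>\<^sup>+y. F (Suc n) y * h y \<partial>lborel)" .
qed

definition FF :: "nat \<Rightarrow> real \<Rightarrow> ennreal" where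
  "FF n = (if odd n then Fodd (n div 2) else Feven (n div 2 - 1))"

lemma FF_meas: "FF n \<in> borel_measurable borel"
  unfolding FF_def by auto

lemma FF_1: "FF 1 y = W 1 y * indicator {0<..<1} y"
  unfolding FF_def W_def by (simp add: Fodd_0)

lemma FF_Suc: "n \<ge> 1 \<Longrightarrow> FF (Suc n) y = W (Suc n) y * indicator {0<..<1} y * (\<integral>\<^sup>+x. FF n x * of_bool (RR n x y) \<partial>lborel)"
proof (cases "odd n")
  case True
  then obtain i where i: "n = 2*i+1" by (metis oddE)
  have a: "FF (Suc n) = Feven i" unfolding FF_def i by simp
  have b: "FF n = Fodd i" unfolding FF_def i by simp
  have c: "W (Suc n) y = ennreal (1 / y)" unfolding W_def i by simp
  have d: "RR n x y = (x < y)" for x unfolding RR_def i by simp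
  show ?thesis unfolding a b c d by (rule Feven_rec)
next
  case False
  assume n: "n \<ge> 1"
  from False obtain m where m: "n = 2*m" by (auto elim: evenE)
  with n have "m \<ge> 1" by simp
  then obtain i where "m = Suc i" by (cases m) auto
  then have i: "n = 2*i+2" using m by simp
  have a: "FF (Suc n) = Fodd (Suc i)" unfolding FF_def i by simp
  have b: "FF n = Feven i" unfolding FF_def i by simp
  have c: "W (Suc n) y = ennreal (1 / (1 - y))" unfolding W_def i by simp
  have d: "RR n x y = (y < x)" for x unfolding RR_def i by simp
  show ?thesis unfolding a b c d by (rule Fodd_rec)
qed

lemma chain_FF:
  assumes "n \<ge> 1"
  shows "(\<integral>\<^sup>+t. indicator (Cset n) t * (\<Prod>j\<in>{1..n}. W j (t j)) \<partial>PiM {1..n} (\<lambda>_. lborel)) = (\<integral>\<^sup>+y. FF n y \<partial>lborel)"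
  using chain[OF FF_meas FF_1 FF_Suc assms, of "\<lambda>_. 1"] by simp

lemma even_constraints:
  assumes k: "k \<ge> 1"
  shows "(t 1 < t 2 \<and> (\<forall>i\<in>{2..k}. t (2*i-1) < t (2*i-2) \<and> t (2*i-1) < t (2*i))) \<longleftrightarrow>
         (\<forall>j\<in>{1..<2*k}. RR j (t j) (t (Suc j)))"
proof
  assume H: "t 1 < t 2 \<and> (\<forall>i\<in>{2..k}. t (2*i-1) < t (2*i-2) \<and> t (2*i-1) < t (2*i))"
  show "\<forall>j\<in>{1..<2*k}. RR j (t j) (t (Suc j))"
  proof
    fix j assume j: "j \<in> {1..<2*k}"
    show "RR j (t j) (t (Suc j))"
    proof (cases "odd j")
      case True
      then obtain i where i: "j = 2*i+1" by (auto elim: oddE)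
      show ?thesis
      proof (cases "i = 0")
        case True then show ?thesis using H i by (simp add: RR_def numeral_2_eq_2)
      next
        case False
        then have "Suc i \<in> {2..k}" using j i by auto
        then have "t (2*Suc i-1) < t (2*Suc i)" using H by blast
        moreover have "2*Suc i-1 = j" "2*Suc i = Suc j" using i by auto
        ultimately show ?thesis using True by (simp add: RR_def)
      qed
    next
      case False
      then obtain i where i: "j = 2*i" by (auto elim: evenE)
      then have "Suc i \<in> {2..k}" using j by auto
      then have "t (2*Suc i-1) < t (2*Suc i-2)" using H by blast
      moreover have "2*Suc i-1 = Suc j" "2*Suc i-2 = j" using i by auto
      ultimately show ?thesis using False by (simp add: RR_def)
    qed
  qed
next
  assume H: "\<forall>j\<in>{1..<2*k}. RR j (t j) (t (Suc j))"
  have "RR 1 (t 1) (t (Suc 1))" using H k by auto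
  then have 1: "t 1 < t 2" by (simp add: RR_def numeral_2_eq_2)
  have "t (2*i-1) < t (2*i-2) \<and> t (2*i-1) < t (2*i)" if i: "i \<in> {2..k}" for i
  proof
    have "2*i-2 \<in> {1..<2*k}" using i by auto
    then have "RR (2*i-2) (t (2*i-2)) (t (Suc (2*i-2)))" using H by blast
    moreover have "Suc (2*i-2) = 2*i-1" "even (2*i-2)" using i by auto
    ultimately show "t (2*i-1) < t (2*i-2)" by (simp add: RR_def)
    have "2*i-1 \<in> {1..<2*k}" using i by auto
    then have "RR (2*i-1) (t (2*i-1)) (t (Suc (2*i-1)))" using H by blast
    moreover have "Suc (2*i-1) = 2*i" "odd (2*i-1)" using i by auto
    ultimately show "t (2*i-1) < t (2*i)" by (simp add: RR_def)
  qed
  then show "t 1 < t 2 \<and> (\<forall>i\<in>{2..k}. t (2*i-1) < t (2*i-2) \<and> t (2*i-1) < t (2*i))" using 1 by blast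
qed

lemma odd_constraints:
  shows "(\<forall>i\<in>{1..k}. t (2*i) > t (2*i-1) \<and> t (2*i) > t (2*i+1)) \<longleftrightarrow>
         (\<forall>j\<in>{1..<2*k+1}. RR j (t j) (t (Suc j)))"
proof
  assume H: "\<forall>i\<in>{1..k}. t (2*i) > t (2*i-1) \<and> t (2*i) > t (2*i+1)"
  show "\<forall>j\<in>{1..<2*k+1}. RR j (t j) (t (Suc j))"
  proof
    fix j assume j: "j \<in> {1..<2*k+1}"
    show "RR j (t j) (t (Suc j))"
    proof (cases "odd j")
      case True
      then obtain i where i: "j = 2*i+1" by (auto elim: oddE)
      then have "Suc i \<in> {1..k}" using j by auto
      then have "t (2*Suc i) > t (2*Suc i-1)" using H by blast
      moreover have "2*Suc i-1 = j" "2*Suc i = Suc j" using i by auto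
      ultimately show ?thesis using True by (simp add: RR_def)
    next
      case False
      then obtain i where i: "j = 2*i" by (auto elim: evenE)
      then have "i \<in> {1..k}" using j by auto
      then have "t (2*i) > t (2*i+1)" using H by blast
      then show ?thesis using False i by (simp add: RR_def)
    qed
  qed
next
  assume H: "\<forall>j\<in>{1..<2*k+1}. RR j (t j) (t (Suc j))"
  show "\<forall>i\<in>{1..k}. t (2*i) > t (2*i-1) \<and> t (2*i) > t (2*i+1)"
  proof
    fix i assume i: "i \<in> {1..k}"
    have "2*i-1 \<in> {1..<2*k+1}" using i by auto
    then have "RR (2*i-1) (t (2*i-1)) (t (Suc (2*i-1)))" using H by blast
    moreover have "Suc (2*i-1) = 2*i" "odd (2*i-1)" using i by auto
    ultimately have a: "t (2*i) > t (2*i-1)" by (simp add: RR_def)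
    have "2*i \<in> {1..<2*k+1}" using i by auto
    then have "RR (2*i) (t (2*i)) (t (Suc (2*i)))" using H by blast
    then have b: "t (2*i) > t (2*i+1)" by (simp add: RR_def)
    show "t (2*i) > t (2*i-1) \<and> t (2*i) > t (2*i+1)" using a b by blast
  qed
qed

lemma Delta_even_eq: "k \<ge> 1 \<Longrightarrow> Delta_even k = Cset (2*k)"
  unfolding Delta_even_def Cset_def by (simp only: even_constraints)

lemma Delta_odd_eq: "Delta_odd k = Cset (2*k+1)"
  unfolding Delta_odd_def Cset_def by (simp only: odd_constraints)

lemma prod_W_even: "(\<Prod>j\<in>{1..2*k}. W j (t j)) = (\<Prod>i\<in>{1..k}. ennreal (1 / (1 - t (2*i-1))) * ennreal (1 / t (2*i)))"
proof (induction k)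
  case 0 then show ?case by simp
next
  case (Suc k)
  have e: "{1..2*Suc k} = insert (Suc (Suc (2*k))) (insert (Suc (2*k)) {1..2*k})" by auto
  have "(\<Prod>j\<in>{1..2*Suc k}. W j (t j)) = W (Suc (Suc (2*k))) (t (Suc (Suc (2*k)))) * (W (Suc (2*k)) (t (Suc (2*k))) * (\<Prod>j\<in>{1..2*k}. W j (t j)))"
    unfolding e by simp
  also have "\<dots> = (\<Prod>i\<in>{1..Suc k}. ennreal (1 / (1 - t (2*i-1))) * ennreal (1 / t (2*i)))"
    unfolding Suc by (simp add: W_def atLeastAtMostSuc_conv mult_ac)
  finally show ?case .
qed

lemma integrand_even:
  assumes pos: "\<And>j. j \<in> {1..2*k} \<Longrightarrow> 0 < t j \<and> t j < 1"
  shows "ennreal (\<Prod>i\<in>{1..k}. 1 / ((1 - t (2*i-1)) * t (2*i))) = (\<Prod>j\<in>{1..2*k}. W j (t j))"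
proof -
  have "ennreal (\<Prod>i\<in>{1..k}. 1 / ((1 - t (2*i-1)) * t (2*i))) = (\<Prod>i\<in>{1..k}. ennreal (1 / ((1 - t (2*i-1)) * t (2*i))))"
  proof (rule prod_ennreal[symmetric])
    fix i assume i: "i \<in> {1..k}"
    have "2*i-1 \<in> {1..2*k}" "2*i \<in> {1..2*k}" using i by auto
    then show "0 \<le> 1 / ((1 - t (2*i-1)) * t (2*i))" using pos by (simp add: less_imp_le)
  qed
  also have "\<dots> = (\<Prod>i\<in>{1..k}. ennreal (1 / (1 - t (2*i-1))) * ennreal (1 / t (2*i)))"
  proof (rule prod.cong[OF refl])
    fix i assume i: "i \<in> {1..k}"
    have "2*i-1 \<in> {1..2*k}" "2*i \<in> {1..2*k}" using i by auto
    then have "0 \<le> 1 / (1 - t (2*i-1))" "0 \<le> 1 / t (2*i)" using pos by (auto simp: less_imp_le)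
    then show "ennreal (1 / ((1 - t (2*i-1)) * t (2*i))) = ennreal (1 / (1 - t (2*i-1))) * ennreal (1 / t (2*i))"
      by (simp add: ennreal_mult[symmetric])
  qed
  finally show ?thesis unfolding prod_W_even .
qed

lemma integrand_odd:
  assumes pos: "\<And>j. j \<in> {1..2*k+1} \<Longrightarrow> 0 < t j \<and> t j < 1"
  shows "ennreal ((\<Prod>i\<in>{1..k}. 1 / ((1 - t (2*i-1)) * t (2*i))) * (1 / (1 - t (2*k+1)))) = (\<Prod>j\<in>{1..2*k+1}. W j (t j))"
proof -
  have p1: "0 \<le> (\<Prod>i\<in>{1..k}. 1 / ((1 - t (2*i-1)) * t (2*i)))"
  proof (rule prod_nonneg)
    fix i assume i: "i \<in> {1..k}"
    have "2*i-1 \<in> {1..2*k+1}" "2*i \<in> {1..2*k+1}" using i by auto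
    then show "0 \<le> 1 / ((1 - t (2*i-1)) * t (2*i))" using pos by (simp add: less_imp_le)
  qed
  have p2: "0 \<le> 1 / (1 - t (2*k+1))" using pos[of "2*k+1"] by simp
  have e: "ennreal (\<Prod>i\<in>{1..k}. 1 / ((1 - t (2*i-1)) * t (2*i))) = (\<Prod>j\<in>{1..2*k}. W j (t j))"
    by (rule integrand_even) (use pos in auto)
  have "{1..2*k+1} = insert (Suc (2*k)) {1..2*k}" by auto
  then have pe: "(\<Prod>j\<in>{1..2*k+1}. W j (t j)) = W (Suc (2*k)) (t (Suc (2*k))) * (\<Prod>j\<in>{1..2*k}. W j (t j))" by simp
  have w: "W (Suc (2*k)) (t (Suc (2*k))) = ennreal (1 / (1 - t (2*k+1)))" by (simp add: W_def)
  show ?thesis unfolding ennreal_mult[OF p1 p2] e pe w by (rule mult.commute)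
qed

lemma zeta_nonneg: "m \<ge> 2 \<Longrightarrow> 0 \<le> zeta (real m)"
  unfolding zeta_nat by (rule suminf_nonneg[OF summable_pow_shift]) auto

lemma Cset_pos: "t \<in> Cset n \<Longrightarrow> j \<in> {1..n} \<Longrightarrow> 0 < t j \<and> t j < 1"
  unfolding Cset_def by auto

theorem proposition5p1:
  fixes k :: nat
  assumes "k \<ge> 1"
  shows "(ennreal (zeta (real (2*k))) =
           ennreal (1 / (2 * (1 - 2 powr (1 - 2 * real k)))) *
           (\<integral>\<^sup>+ t \<in> Delta_even k.
              ennreal (\<Prod>i\<in>{1..k}. 1 / ((1 - t (2*i-1)) * t (2*i))) \<partial>cube_measure (2*k))) \<and>
         (ennreal (zeta (real (2*k+1))) =
           ennreal (1/2) *
           (\<integral>\<^sup>+ t \<in> Delta_odd k.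
              ennreal ((\<Prod>i\<in>{1..k}. 1 / ((1 - t (2*i-1)) * t (2*i))) * (1 / (1 - t (2*k+1))))
            \<partial>cube_measure (2*k+1)))"
proof
  have k: "k \<ge> 1" by (rule assms)
  have Ie: "(\<integral>\<^sup>+ t \<in> Delta_even k. ennreal (\<Prod>i\<in>{1..k}. 1 / ((1 - t (2*i-1)) * t (2*i))) \<partial>cube_measure (2*k))
      = GG k 1"
  proof -
    have "(\<integral>\<^sup>+ t \<in> Delta_even k. ennreal (\<Prod>i\<in>{1..k}. 1 / ((1 - t (2*i-1)) * t (2*i))) \<partial>cube_measure (2*k))
        = (\<integral>\<^sup>+t. indicator (Cset (2*k)) t * (\<Prod>j\<in>{1..2*k}. W j (t j)) \<partial>PiM {1..2*k} (\<lambda>_. lborel))"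
    proof (rule nn_integral_cong)
      fix t :: "nat \<Rightarrow> real"
      show "ennreal (\<Prod>i\<in>{1..k}. 1 / ((1 - t (2*i-1)) * t (2*i))) * indicator (Delta_even k) t
          = indicator (Cset (2*k)) t * (\<Prod>j\<in>{1..2*k}. W j (t j))"
      proof (cases "t \<in> Cset (2*k)")
        case True
        then show ?thesis unfolding Delta_even_eq[OF k]
          using integrand_even[of k t] Cset_pos[OF True] by simp
      qed (simp add: Delta_even_eq[OF k])
    qed
    also have "\<dots> = (\<integral>\<^sup>+y. FF (2*k) y \<partial>lborel)" by (rule chain_FF) (use k in simp)
    also have "FF (2*k) = Feven (k - 1)" unfolding FF_def by simp
    also have "(\<integral>\<^sup>+y. Feven (k - 1) y \<partial>lborel) = GG (Suc (k - 1)) (Suc 0)" by (rule Feven_int)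
    also have "Suc (k - 1) = k" using k by simp
    finally show ?thesis by simp
  qed
  define p where "p = (2::real) powr (1 - 2 * real k)"
  have p1: "p < 1" unfolding p_def using k by (simp add: powr_less_one)
  have z0: "0 \<le> zeta (real (2*k))" using k by (intro zeta_nonneg) simp
  show "ennreal (zeta (real (2*k))) =
           ennreal (1 / (2 * (1 - 2 powr (1 - 2 * real k)))) *
           (\<integral>\<^sup>+ t \<in> Delta_even k.
              ennreal (\<Prod>i\<in>{1..k}. 1 / ((1 - t (2*i-1)) * t (2*i))) \<partial>cube_measure (2*k))"
    unfolding Ie even_value[OF k] p_def[symmetric]
  proof -
    have a: "0 \<le> 1 / (2 * (1 - p))" using p1 by simp
    have b: "0 \<le> 2 * (1 - p) * zeta (real (2*k))" using p1 z0 by simp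
    have e: "1 / (2 * (1 - p)) * (2 * (1 - p) * zeta (real (2*k))) = zeta (real (2*k))" using p1 by simp
    show "ennreal (zeta (real (2*k))) = ennreal (1 / (2 * (1 - p))) * ennreal (2 * (1 - p) * zeta (real (2*k)))"
      unfolding ennreal_mult[OF a b, symmetric] e ..
  qed
next
  have k: "k \<ge> 1" by (rule assms)
  have Io: "(\<integral>\<^sup>+ t \<in> Delta_odd k.
              ennreal ((\<Prod>i\<in>{1..k}. 1 / ((1 - t (2*i-1)) * t (2*i))) * (1 / (1 - t (2*k+1)))) \<partial>cube_measure (2*k+1))
      = ennreal (2 * zeta (real (2*k+1)))"
  proof -
    have "(\<integral>\<^sup>+ t \<in> Delta_odd k.
              ennreal ((\<Prod>i\<in>{1..k}. 1 / ((1 - t (2*i-1)) * t (2*i))) * (1 / (1 - t (2*k+1)))) \<partial>cube_measure (2*k+1))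
        = (\<integral>\<^sup>+t. indicator (Cset (2*k+1)) t * (\<Prod>j\<in>{1..2*k+1}. W j (t j)) \<partial>PiM {1..2*k+1} (\<lambda>_. lborel))"
    proof (rule nn_integral_cong)
      fix t :: "nat \<Rightarrow> real"
      show "ennreal ((\<Prod>i\<in>{1..k}. 1 / ((1 - t (2*i-1)) * t (2*i))) * (1 / (1 - t (2*k+1)))) * indicator (Delta_odd k) t
          = indicator (Cset (2*k+1)) t * (\<Prod>j\<in>{1..2*k+1}. W j (t j))"
      proof (cases "t \<in> Cset (2*k+1)")
        case True
        then show ?thesis unfolding Delta_odd_eq
          using integrand_odd[of k t] Cset_pos[OF True] by simp
      qed (simp add: Delta_odd_eq)
    qed
    also have "\<dots> = (\<integral>\<^sup>+y. FF (2*k+1) y \<partial>lborel)" by (rule chain_FF) simp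
    also have "FF (2*k+1) = Fodd k" unfolding FF_def by simp
    also have "(\<integral>\<^sup>+y. Fodd k y \<partial>lborel) = ennreal (2 * zeta (real (2*k+1)))"
      unfolding Fodd_int by (rule odd_value[OF k])
    finally show ?thesis .
  qed
  have z0: "0 \<le> zeta (real (2*k+1))" using k by (intro zeta_nonneg) simp
  show "ennreal (zeta (real (2*k+1))) =
           ennreal (1/2) *
           (\<integral>\<^sup>+ t \<in> Delta_odd k.
              ennreal ((\<Prod>i\<in>{1..k}. 1 / ((1 - t (2*i-1)) * t (2*i))) * (1 / (1 - t (2*k+1))))
            \<partial>cube_measure (2*k+1))"
    unfolding Io
  proof -
    have a: "0 \<le> (1/2::real)" by simp
    have b: "0 \<le> 2 * zeta (real (2*k+1))" using z0 by simp
    have e: "1/2 * (2 * zeta (real (2*k+1))) = zeta (real (2*k+1))" by simp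
    show "ennreal (zeta (real (2*k+1))) = ennreal (1/2) * ennreal (2 * zeta (real (2*k+1)))"
      unfolding ennreal_mult[OF a b, symmetric] e ..
  qed
qed

end
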